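(* Let $X$ and $\Sigma$ be finite alphabets, let $A$ be a $P(X)$-automaton over $\Sigma$ with state set $Q$ accepting the language $L \subseteq \Sigma^*$, each of whose edges is labelled by a pair $(y, a)$ with $y \in \{\epsilon\} \cup X \cup \{x^{-1} : x \in X\}$ and $a \in \Sigma \cup \{\epsilon\}$. Let $\#$ be a new symbol not in $X$, put $X^\# = X \cup \{\#\}$, and let $A'$ be the finite automaton with edges labelled by elements of $(\overline{X^\#})^* \times \Sigma^*$ constructed as follows: its state set is $Q_+ \cup Q_-$, where $Q_+ = \{q_+ : q \in Q\}$ and $Q_- = \{q_- : q \in Q\}$ are disjoint copies of $Q$; its start state is $q_+$ where $q$ is the start state of $A$; its final states are the $q_-$ with $q$ a final state of $A$; it has an edge from $p_+$ to $q_+$ labelled $(x\#, a)$ whenever $A$ has an edge from $p$ to $q$ labelled $(x,a)$ with $x \in X$; an edge from $p_-$ to $q_+$ labelled $(x^{-1}\#, a)$ whenever $A$ has an edge from $p$ to $q$ labelled $(x^{-1}, a)$ with $x \in X$; an edge from $p_+$ to $q_+$ labelled $(\epsilon, a)$ whenever $A$ has an edge from $p$ to $q$ labelled $(\epsilon, a)$; for each $q \in Q$ an edge from $q_+$ to $q_-$ labelled $(\epsilon,\epsilon)$; and for each $q \in Q$ a loop at $q_-$ labelled $(\#^{-1}, \epsilon)$. Then $A'$, interpreted as a free group automaton (i.e. an $F(X^\#)$-automaton, first components read in $F(X^\#)$), accepts exactly $L$, and $A'$, interpreted as a polycyclic monoid automaton (a $P(X^\#)$-automaton), also accepts exactly 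$L$.
   Context: For a monoid $M$ with identity $1$ and a finite alphabet $\Sigma$, an $M$-automaton over $\Sigma$ is a finite directed graph whose edges are labelled by elements of $M \times \Sigma^*$, with an initial vertex and a set of terminal vertices; a word $w \in \Sigma^*$ is accepted if some path from the initial vertex to a terminal vertex has label (product of edge labels in $M \times \Sigma^*$) equal to $(1,w)$. For an alphabet $Y$, $\overline{Y} = \{y, y^{-1} : y \in Y\}$; letters of $Y$ are positive generators and letters $y^{-1}$ negative generators. The polycyclic monoid $P(Y)$ is the monoid of partial functions on $Y^*$ (composed left to right: $fg$ means apply $f$ then $g$) generated by $y: w \mapsto wy$ (defined everywhere) and $y^{-1}: wy \mapsto w$ (defined on $Y^*y$), $y \in Y$; a word over $\overline{Y}$ thus represents an element of $P(Y)$, and $\epsilon$ represents the identity. $F(Y)$ is the free group on $Y$, with presentation $\langle \overline{Y} \mid yy^{-1} = y^{-1}y = 1 \ (y \in Y)\rangle$. A word $u \in \overline{Y}^*$ labelling an edge is interpreted as the element of $P(Y)$ or $F(Y)$ it represents. *)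

theory Defs
  imports Main
begin

datatype 'y gen = Pos 'y | Neg 'y

text \<open>Action of a single generator of the polycyclic monoid P(Y) on \<open>Y\<^sup>*\<close>
  (partial function): \<open>y: w \<mapsto> wy\<close>, \<open>y\<^sup>-\<^sup>1: wy \<mapsto> w\<close>.\<close>
fun pc_gen :: "'y gen \<Rightarrow> 'y list \<Rightarrow> 'y list option" where
  "pc_gen (Pos y) w = Some (w @ [y])"
| "pc_gen (Neg y) w = (if w \<noteq> [] \<and> last w = y then Some (butlast w) else None)"

fun pc_act :: "'y gen list \<Rightarrow> 'y list \<Rightarrow> 'y list option" where
  "pc_act [] w = Some w"
| "pc_act (g # u) w = (case pc_gen g w of None \<Rightarrow> None | Some v \<Rightarrow> pc_act u v)"

text \<open>The word represents the identity element of P(Y).\<close>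
definition pc_one :: "'y gen list \<Rightarrow> bool" where
  "pc_one u \<longleftrightarrow> (\<forall>w. pc_act u w = Some w)"

fun gen_inv :: "'y gen \<Rightarrow> 'y gen" where
  "gen_inv (Pos y) = Neg y"
| "gen_inv (Neg y) = Pos y"

definition fg_step :: "('y gen list \<times> 'y gen list) set" where
  "fg_step = {(xs @ [g, gen_inv g] @ ys, xs @ ys) | xs g ys. True}"

text \<open>The word represents the identity of the free group
  F(Y) = \<open>\<langle>\<overline>Y | yy\<^sup>-\<^sup>1 = y\<^sup>-\<^sup>1y = 1\<rangle>\<close>.\<close>
definition fg_one :: "'y gen list \<Rightarrow> bool" where
  "fg_one u \<longleftrightarrow> (u, []) \<in> (fg_step \<union> fg_step\<inverse>)\<^sup>*"

text \<open>Paths in an automaton whose edges are (source, group word, input word, target);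
  the label of a path is the product of edge labels.\<close>
inductive run :: "('q \<times> 'y gen list \<times> 's list \<times> 'q) set \<Rightarrow> 'q \<Rightarrow> 'y gen list \<Rightarrow> 's list \<Rightarrow> 'q \<Rightarrow> bool"
  for E where
  run_nil: "run E p [] [] p"
| run_cons: "(p, u, a, p') \<in> E \<Longrightarrow> run E p' v w q \<Longrightarrow> run E p (u @ v) (a @ w) q"

text \<open>M-automaton acceptance, where \<open>one\<close> decides whether a word over the generators
  represents the identity of M.\<close>
definition accepts :: "('y gen list \<Rightarrow> bool) \<Rightarrow> ('q \<times> 'y gen list \<times> 's list \<times> 'q) set
    \<Rightarrow> 'q \<Rightarrow> 'q set \<Rightarrow> 's list \<Rightarrow> bool" where
  "accepts one E q0 F w \<longleftrightarrow> (\<exists>u q. q \<in> F \<and> run E q0 u w q \<and> one u)"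

text \<open>The construction of A'. States: (q, True) = q+, (q, False) = q-.
  Generators of X^#: Some x = x, None = #.\<close>
definition sharp_edges :: "'q set \<Rightarrow> ('q \<times> 'x gen list \<times> 's list \<times> 'q) set
    \<Rightarrow> (('q \<times> bool) \<times> 'x option gen list \<times> 's list \<times> ('q \<times> bool)) set" where
  "sharp_edges Q E =
     {((p, True), [Pos (Some x), Pos None], a, (q, True)) | p x a q. (p, [Pos x], a, q) \<in> E}
   \<union> {((p, False), [Neg (Some x), Pos None], a, (q, True)) | p x a q. (p, [Neg x], a, q) \<in> E}
   \<union> {((p, True), [], a, (q, True)) | p a q. (p, [], a, q) \<in> E}
   \<union> {((q, True), [], [], (q, False)) | q. q \<in> Q}
   \<union> {((q, False), [Neg None], [], (q, False)) | q. q \<in> Q}"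

definition sharp_init :: "'q \<Rightarrow> 'q \<times> bool" where
  "sharp_init q0 = (q0, True)"

definition sharp_finals :: "'q set \<Rightarrow> ('q \<times> bool) set" where
  "sharp_finals F = {(q, False) | q. q \<in> F}"

end

theory Submission
  imports Defs
begin


definition red1 :: "'y gen \<Rightarrow> 'y gen list \<Rightarrow> 'y gen list" where
  "red1 g r = (if r \<noteq> [] \<and> last r = gen_inv g then butlast r else r @ [g])"

definition red :: "'y gen list \<Rightarrow> 'y gen list \<Rightarrow> 'y gen list" where
  "red r u = foldl (\<lambda>r g. red1 g r) r u"

lemma red_Nil[simp]: "red r [] = r" by (simp add: red_def)
lemma red_Cons[simp]: "red r (g # u) = red (red1 g r) u" by (simp add: red_def)
lemma red_append: "red r (u @ v) = red (red r u) v" by (simp add: red_def)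

definition reduced :: "'y gen list \<Rightarrow> bool" where
  "reduced r \<longleftrightarrow> (\<forall>xs g ys. r \<noteq> xs @ [g, gen_inv g] @ ys)"

lemma gen_inv_inv[simp]: "gen_inv (gen_inv g) = g" by (cases g) auto

lemma reduced_butlast: assumes "reduced r" shows "reduced (butlast r)"
proof (cases r rule: rev_cases)
  case Nil then show ?thesis using assms by simp
next
  case (snoc r0 c)
  show ?thesis unfolding reduced_def
  proof (intro allI notI)
    fix xs g ys assume "butlast r = xs @ [g, gen_inv g] @ ys"
    then have "r = xs @ [g, gen_inv g] @ (ys @ [c])" using snoc by simp
    then show False using assms unfolding reduced_def by blast
  qed
qed

lemma reduced_snoc:
  assumes "reduced r" "\<not> (r \<noteq> [] \<and> last r = gen_inv g)"
  shows "reduced (r @ [g])"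
  unfolding reduced_def
proof (intro allI notI)
  fix xs h ys assume eq: "r @ [g] = xs @ [h, gen_inv h] @ ys"
  show False
  proof (cases ys rule: rev_cases)
    case Nil
    then have "r = xs @ [h]" "g = gen_inv h" using eq by auto
    then show False using assms(2) by simp
  next
    case (snoc ys' c)
    then have "r = xs @ [h, gen_inv h] @ ys'" using eq by simp
    then show False using assms(1) unfolding reduced_def by blast
  qed
qed

lemma reduced_red1: "reduced r \<Longrightarrow> reduced (red1 g r)"
  unfolding red1_def using reduced_butlast reduced_snoc[of r g] by auto

lemma reduced_red: "reduced r \<Longrightarrow> reduced (red r u)"
  by (induction u arbitrary: r) (auto simp: reduced_red1)

lemma red1_cancel:
  assumes "reduced r" shows "red1 (gen_inv g) (red1 g r) = r"
proof (cases "r \<noteq> [] \<and> last r = gen_inv g")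
  case True
  define r0 where "r0 = butlast r"
  have r: "r = r0 @ [gen_inv g]" using True r0_def by (metis append_butlast_last_id)
  have "\<not> (r0 \<noteq> [] \<and> last r0 = g)"
  proof
    assume "r0 \<noteq> [] \<and> last r0 = g"
    then have "r0 = butlast r0 @ [g]" by (metis append_butlast_last_id)
    then have "r = butlast r0 @ [g, gen_inv g] @ []" using r by (metis append.assoc append_Cons append_Nil append_Nil2)
    then show False using assms unfolding reduced_def by blast
  qed
  then show ?thesis using True r unfolding red1_def r0_def[symmetric] by auto
next
  case False
  then have "red1 g r = r @ [g]" unfolding red1_def by presburger
  then show ?thesis by (simp add: red1_def)
qed

lemma red_step: "reduced r \<Longrightarrow> (u, v) \<in> fg_step \<Longrightarrow> red r u = red r v"
  unfolding fg_step_def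
  by (auto simp: red_append red1_cancel reduced_red)

lemma red_equiv:
  assumes "(u, v) \<in> (fg_step \<union> fg_step\<inverse>)\<^sup>*"
  shows "red [] u = red [] v"
  using assms
proof (induction rule: rtrancl_induct)
  case base then show ?case by simp
next
  case (step y z)
  have "reduced ([] :: 'a gen list)" unfolding reduced_def by simp
  with step show ?case using red_step by fastforce
qed

lemma fg_one_red: "fg_one u \<Longrightarrow> red [] u = []"
  unfolding fg_one_def using red_equiv by fastforce

lemma pc_act_append:
  "pc_act (u @ v) w = (case pc_act u w of None \<Rightarrow> None | Some w' \<Rightarrow> pc_act v w')"
  by (induction u arbitrary: w) (auto split: option.split)

lemma pc_act_ext: "pc_act u w = Some v \<Longrightarrow> pc_act u (z @ w) = Some (z @ v)"
proof (induction u arbitrary: w)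
  case Nil then show ?case by simp
next
  case (Cons g u)
  show ?case
  proof (cases g)
    case (Pos y) then show ?thesis using Cons by simp
  next
    case (Neg y)
    then show ?thesis using Cons
      by (auto split: if_splits simp: butlast_append)
  qed
qed

lemma pc_one_iff: "pc_one u \<longleftrightarrow> pc_act u [] = Some []"
  unfolding pc_one_def using pc_act_ext[of u "[]" "[]"] by auto

lemma pc_fg: "pc_act u w = Some v \<Longrightarrow> (map Pos w @ u, map Pos v) \<in> (fg_step \<union> fg_step\<inverse>)\<^sup>*"
proof (induction u arbitrary: w)
  case Nil then show ?case by simp
next
  case (Cons g u)
  show ?case
  proof (cases g)
    case (Pos y) then show ?thesis using Cons.IH[of "w @ [y]"] Cons.prems by simp
  next
    case (Neg y)
    then have w: "w \<noteq> []" "last w = y" and pu: "pc_act u (butlast w) = Some v"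
      using Cons.prems by (auto split: if_splits)
    have ww: "w = butlast w @ [y]" using w by (metis append_butlast_last_id)
    have "(map Pos w @ g # u, map Pos (butlast w) @ u) \<in> fg_step"
    proof -
      have "map Pos w = map Pos (butlast w) @ [Pos y]" using ww by (metis list.map(1,2) map_append)
      then have "map Pos w @ g # u = map Pos (butlast w) @ [Pos y, gen_inv (Pos y)] @ u" using Neg by simp
      then show ?thesis unfolding fg_step_def by blast
    qed
    then show ?thesis using Cons.IH[OF pu]
      by (meson UnI1 converse_rtrancl_into_rtrancl)
  qed
qed

lemma pc_one_fg_one: "pc_one u \<Longrightarrow> fg_one u"
  unfolding pc_one_iff fg_one_def using pc_fg[of u "[]" "[]"] by simp



fun somes :: "'x option list \<Rightarrow> 'x list" where
  "somes [] = []"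
| "somes (None # t) = somes t"
| "somes (Some x # t) = x # somes t"

lemma somes_append[simp]: "somes (t @ t') = somes t @ somes t'"
  by (induction t rule: somes.induct) auto

lemma somes_rep_None[simp]: "somes (replicate k None) = []"
  by (induction k) auto

lemma somes_Nil_rep: "somes z = [] \<Longrightarrow> z = replicate (length z) None"
  by (induction z rule: somes.induct) auto

lemma somes_decomp:
  "somes z \<noteq> [] \<Longrightarrow> last (somes z) = x \<Longrightarrow>
   \<exists>z0 k. z = z0 @ [Some x] @ replicate k None \<and> somes z0 = butlast (somes z)"
proof (induction z rule: rev_induct)
  case Nil then show ?case by simp
next
  case (snoc c z1)
  show ?case
  proof (cases c)
    case None
    then have e: "somes (z1 @ [c]) = somes z1" by simp
    have "somes z1 \<noteq> []" "last (somes z1) = x" using snoc.prems e by auto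
    with snoc.IH obtain z0 k where "z1 = z0 @ [Some x] @ replicate k None" "somes z0 = butlast (somes z1)"
      by blast
    then show ?thesis using None
      by (intro exI[of _ z0] exI[of _ "Suc k"]) (simp add: replicate_append_same[symmetric] e)
  next
    case (Some y)
    then show ?thesis using snoc.prems by (intro exI[of _ z1] exI[of _ 0]) simp
  qed
qed

lemma run_append: "run E p u a q \<Longrightarrow> run E q v b r \<Longrightarrow> run E p (u @ v) (a @ b) r"
  apply (induction rule: run.induct)
   apply simp
  by (metis append_assoc run.run_cons)

lemma run_edge: "(p, u, a, q) \<in> E \<Longrightarrow> run E q v w r \<Longrightarrow> run E p (u @ v) (a @ w) r"
  by (rule run_cons)

lemma pc_pops: "pc_act (replicate k (Neg None)) (y @ replicate k None) = Some y"
proof (induction k)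
  case 0 then show ?case by simp
next
  case (Suc k)
  have "y @ replicate (Suc k) None = (y @ replicate k None) @ [None]"
    by (simp add: replicate_append_same[symmetric])
  then show ?case using Suc by (simp del: append_assoc)
qed

lemma run_loops:
  assumes "q \<in> Q"
  shows "run (sharp_edges Q E) (q, False) (replicate k (Neg None)) [] (q, False)"
proof (induction k)
  case 0 then show ?case by (simp add: run_nil)
next
  case (Suc k)
  have "((q, False), [Neg None], [], (q, False)) \<in> sharp_edges Q E"
    using assms unfolding sharp_edges_def by blast
  from run_cons[OF this Suc] show ?case by simp
qed

lemma sharp_edges_cases:
  assumes "(P, e, a, P') \<in> sharp_edges Q E"
  obtains (E1) p x q where "P = (p, True)" "e = [Pos (Some x), Pos None]" "P' = (q, True)" "(p, [Pos x], a, q) \<in> E"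
  | (E2) p x q where "P = (p, False)" "e = [Neg (Some x), Pos None]" "P' = (q, True)" "(p, [Neg x], a, q) \<in> E"
  | (E3) p q where "P = (p, True)" "e = []" "P' = (q, True)" "(p, [], a, q) \<in> E"
  | (E4) q where "P = (q, True)" "e = []" "a = []" "P' = (q, False)" "q \<in> Q"
  | (E5) q where "P = (q, False)" "e = [Neg None]" "a = []" "P' = (q, False)" "q \<in> Q"
  using assms unfolding sharp_edges_def by blast

definition Bad :: "bool \<Rightarrow> 'x option gen list \<Rightarrow> bool" where
  "Bad b r \<longleftrightarrow> (\<exists>r0 g t. r = r0 @ [Neg g] @ map Pos t \<and> (t \<noteq> [] \<longrightarrow> hd t = None)
      \<and> (b \<longrightarrow> t \<noteq> [] \<and> last t = None))"

lemma Bad_nonempty: "Bad b r \<Longrightarrow> r \<noteq> []"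
  unfolding Bad_def by auto

lemma red1_pos_map: "red1 (Pos c) (map Pos t) = map Pos (t @ [c])"
  unfolding red1_def by (cases t rule: rev_cases) auto

lemma red_map_pos: "red (map Pos t) (map Pos v) = map Pos (t @ v)"
proof (induction v arbitrary: t)
  case (Cons a v) show ?case using Cons.IH[of "t @ [a]"] by (simp add: red1_pos_map)
qed simp

lemma red1_app: "\<not> (r \<noteq> [] \<and> last r = gen_inv g) \<Longrightarrow> red1 g r = r @ [g]"
  unfolding red1_def by presburger

lemma red1_can: "red1 g (r @ [gen_inv g]) = r"
  unfolding red1_def by simp

lemma bad_edge:
  assumes "(P, e, a, P') \<in> sharp_edges Q E" "Bad (snd P) r"
  shows "Bad (snd P') (red r e)"
  using assms(1)
proof (cases rule: sharp_edges_cases)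
  case (E1 p x q)
  from assms(2) obtain r0 g t where r: "r = r0 @ [Neg g] @ map Pos t" "t \<noteq> []" "hd t = None" "last t = None"
    unfolding Bad_def E1 by auto
  have lr: "last r = Pos None" using r by (simp add: last_map)
  have "red r e = r @ [Pos (Some x), Pos None]"
    using lr E1 by (simp add: red1_app)
  then show ?thesis unfolding Bad_def E1 using r
    by (intro exI[of _ r0] exI[of _ g] exI[of _ "t @ [Some x, None]"]) simp
next
  case (E2 p x q)
  from assms(2) obtain r0 g t where r: "r = r0 @ [Neg g] @ map Pos t" "t \<noteq> [] \<longrightarrow> hd t = None"
    unfolding Bad_def E2 by auto
  show ?thesis
  proof (cases "t \<noteq> [] \<and> last t = Some x")
    case True
    then obtain t0 where t: "t = t0 @ [Some x]" by (metis append_butlast_last_id)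
    then have "t0 \<noteq> []" using r True by auto
    then have h: "hd t0 = None" using r t by simp
    have "red1 (Neg (Some x)) r = r0 @ [Neg g] @ map Pos t0"
      using red1_can[of "Neg (Some x)" "r0 @ [Neg g] @ map Pos t0"] r t by simp
    moreover have "red1 (Pos None) (r0 @ [Neg g] @ map Pos t0) = r0 @ [Neg g] @ map Pos (t0 @ [None])"
      using \<open>t0 \<noteq> []\<close> by (subst red1_app) (auto simp: last_map)
    ultimately have "red r e = r0 @ [Neg g] @ map Pos (t0 @ [None])" using E2 by simp
    then show ?thesis unfolding Bad_def E2 using h \<open>t0 \<noteq> []\<close>
      by (intro exI[of _ r0] exI[of _ g] exI[of _ "t0 @ [None]"]) simp
  next
    case False
    have "last r \<noteq> Pos (Some x)" using False r by (cases "t = []") (auto simp: last_map)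
    then have "red1 (Neg (Some x)) r = r @ [Neg (Some x)]" by (subst red1_app) auto
    moreover have "red1 (Pos None) (r @ [Neg (Some x)]) = r @ [Neg (Some x), Pos None]"
      by (subst red1_app) auto
    ultimately have "red r e = r @ [Neg (Some x)] @ map Pos [None]" using E2 by simp
    then show ?thesis unfolding Bad_def E2
      by (intro exI[of _ r] exI[of _ "Some x"] exI[of _ "[None]"]) simp
  qed
next
  case (E3 p q)
  then show ?thesis using assms(2) by simp
next
  case (E4 q)
  then show ?thesis using assms(2) unfolding Bad_def by auto
next
  case (E5 q)
  from assms(2) obtain r0 g t where r: "r = r0 @ [Neg g] @ map Pos t" "t \<noteq> [] \<longrightarrow> hd t = None"
    unfolding Bad_def E5 by auto
  show ?thesis
  proof (cases "t \<noteq> [] \<and> last t = None")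
    case True
    then obtain t0 where t: "t = t0 @ [None]" by (metis append_butlast_last_id)
    have "red r e = r0 @ [Neg g] @ map Pos t0"
      using red1_can[of "Neg None" "r0 @ [Neg g] @ map Pos t0"] r t E5 by simp
    then show ?thesis unfolding Bad_def E5 using r t
      by (intro exI[of _ r0] exI[of _ g] exI[of _ t0]) (cases t0, auto)
  next
    case False
    have "last r \<noteq> Pos None" using False r by (cases "t = []") (auto simp: last_map)
    then have "red r e = r @ [Neg None] @ map Pos []" using E5 by (simp add: red1_app)
    then show ?thesis unfolding Bad_def E5
      by (intro exI[of _ r] exI[of _ None] exI[of _ "[]"]) simp
  qed
qed

lemma bad_run: "run (sharp_edges Q E) P u a P' \<Longrightarrow> Bad (snd P) r \<Longrightarrow> Bad (snd P') (red r u)"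
proof (induction arbitrary: r rule: run.induct)
  case (run_nil p) then show ?case by simp
next
  case (run_cons p u a p' v w q)
  then show ?case using bad_edge[OF run_cons.hyps(1) run_cons.prems] by (simp add: red_append)
qed



lemma good_run:
  "run (sharp_edges Q E) P u' a P' \<Longrightarrow> (snd P \<longrightarrow> t = [] \<or> last t = None) \<Longrightarrow>
   red (map Pos t) u' = [] \<Longrightarrow> \<exists>u. run E (fst P) u a (fst P') \<and> pc_act u (somes t) = Some []"
proof (induction arbitrary: t rule: run.induct)
  case (run_nil p)
  then show ?case by (intro exI[of _ "[]"]) (auto intro: run.run_nil)
next
  case (run_cons P e a1 P1 v w P')
  have rest: "red (red (map Pos t) e) v = []" using run_cons.prems(2) by (simp add: red_append)
  have nobad: False if "Bad (snd P1) (red (map Pos t) e)"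
    using Bad_nonempty[OF bad_run[OF run_cons.hyps(2) that]] rest by simp
  from run_cons.hyps(1) show ?case
  proof (cases rule: sharp_edges_cases)
    case (E1 p x q)
    have "red (map Pos t) e = map Pos (t @ [Some x, None])" using E1 red_map_pos[of t "[Some x, None]"] by simp
    then obtain u where "run E q u w (fst P')" "pc_act u (somes (t @ [Some x, None])) = Some []"
      using run_cons.IH[of "t @ [Some x, None]"] rest E1 by auto
    then show ?thesis using E1 run.run_cons[of p "[Pos x]" a1 q E u w "fst P'"]
      by (intro exI[of _ "[Pos x] @ u"]) simp
  next
    case (E2 p x q)
    show ?thesis
    proof (cases "t \<noteq> [] \<and> last t = Some x")
      case True
      then obtain t0 where t: "t = t0 @ [Some x]" by (metis append_butlast_last_id)
      have "red1 (Neg (Some x)) (map Pos t) = map Pos t0"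
        using red1_can[of "Neg (Some x)" "map Pos t0"] t by simp
      then have "red (map Pos t) e = map Pos (t0 @ [None])" using E2 red1_pos_map[of None t0] by simp
      then obtain u where "run E q u w (fst P')" "pc_act u (somes (t0 @ [None])) = Some []"
        using run_cons.IH[of "t0 @ [None]"] rest E2 by auto
      then show ?thesis using E2 t run.run_cons[of p "[Neg x]" a1 q E u w "fst P'"]
        by (intro exI[of _ "[Neg x] @ u"]) simp
    next
      case False
      have "\<not> (map Pos t \<noteq> [] \<and> last (map Pos t) = gen_inv (Neg (Some x)))" using False by (auto simp: last_map)
      then have "red1 (Neg (Some x)) (map Pos t) = map Pos t @ [Neg (Some x)]" by (rule red1_app)
      moreover have "red1 (Pos None) (map Pos t @ [Neg (Some x)]) = map Pos t @ [Neg (Some x), Pos None]"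
        by (subst red1_app) auto
      ultimately have "red (map Pos t) e = map Pos t @ [Neg (Some x)] @ map Pos [None]" using E2 by simp
      then have "Bad (snd P1) (red (map Pos t) e)" unfolding Bad_def
        by (intro exI[of _ "map Pos t"] exI[of _ "Some x"] exI[of _ "[None]"]) simp
      then show ?thesis using nobad by blast
    qed
  next
    case (E3 p q)
    then obtain u where "run E q u w (fst P')" "pc_act u (somes t) = Some []"
      using run_cons.IH[of t] rest run_cons.prems(1) by auto
    then show ?thesis using E3 run.run_cons[of p "[]" a1 q E u w "fst P'"]
      by (intro exI[of _ u]) simp
  next
    case (E4 q)
    then show ?thesis using run_cons.IH[of t] rest by auto
  next
    case (E5 q)
    show ?thesis
    proof (cases "t \<noteq> [] \<and> last t = None")
      case True
      then obtain t0 where t: "t = t0 @ [None]" by (metis append_butlast_last_id)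
      have "red (map Pos t) e = map Pos t0"
        using red1_can[of "Neg None" "map Pos t0"] t E5 by simp
      then show ?thesis using run_cons.IH[of t0] rest E5 t by auto
    next
      case False
      have "\<not> (map Pos t \<noteq> [] \<and> last (map Pos t) = gen_inv (Neg None))" using False by (auto simp: last_map)
      then have "red1 (Neg None) (map Pos t) = map Pos t @ [Neg None]" by (rule red1_app)
      then have "red (map Pos t) e = map Pos t @ [Neg None] @ map Pos []" using E5 by simp
      then have "Bad (snd P1) (red (map Pos t) e)" unfolding Bad_def E5
        by (intro exI[of _ "map Pos t"] exI[of _ None] exI[of _ "[]"]) simp
      then show ?thesis using nobad by blast
    qed
  qed
qed


lemma sim_run:
  assumes edges: "\<forall>(p, u, a, q) \<in> E. p \<in> Q \<and> q \<in> Q \<and> length u \<le> 1 \<and> length a \<le> 1"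
  shows "run E p u a q \<Longrightarrow> pc_act u (somes z) = Some s' \<Longrightarrow>
    \<exists>u' z'. run (sharp_edges Q E) (p, True) u' a (q, True) \<and> pc_act u' z = Some z' \<and> somes z' = s'"
proof (induction arbitrary: z rule: run.induct)
  case (run_nil p)
  then show ?case by (intro exI[of _ "[]"] exI[of _ z]) (auto intro: run.run_nil)
next
  case (run_cons p e a1 p1 v w q)
  have pQ: "p \<in> Q" and le: "length e \<le> 1" using edges run_cons.hyps(1) by auto
  consider (e0) "e = []" | (ePos) x where "e = [Pos x]" | (eNeg) x where "e = [Neg x]"
  proof -
    have "e = [] \<or> (\<exists>g. e = [g])" using le by (cases e) auto
    then show ?thesis using that by (metis gen.exhaust)
  qed
  then show ?case
  proof cases
    case e0
    then obtain u' z' where "run (sharp_edges Q E) (p1, True) u' w (q, True)" "pc_act u' z = Some z'" "somes z' = s'"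
      using run_cons.IH[of z] run_cons.prems by auto
    moreover have "((p, True), [], a1, (p1, True)) \<in> sharp_edges Q E"
      using run_cons.hyps(1) e0 unfolding sharp_edges_def by blast
    ultimately show ?thesis using run.run_cons[of "(p, True)" "[]" a1 "(p1, True)" "sharp_edges Q E" u' w "(q, True)"]
      by (intro exI[of _ u'] exI[of _ z']) simp
  next
    case (ePos x)
    then have "pc_act v (somes (z @ [Some x, None])) = Some s'" using run_cons.prems by simp
    then obtain u' z' where "run (sharp_edges Q E) (p1, True) u' w (q, True)" "pc_act u' (z @ [Some x, None]) = Some z'" "somes z' = s'"
      using run_cons.IH by blast
    moreover have "((p, True), [Pos (Some x), Pos None], a1, (p1, True)) \<in> sharp_edges Q E"
      using run_cons.hyps(1) ePos unfolding sharp_edges_def by blast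
    ultimately show ?thesis using run.run_cons[of "(p, True)" "[Pos (Some x), Pos None]" a1 "(p1, True)" "sharp_edges Q E" u' w "(q, True)"]
      by (intro exI[of _ "[Pos (Some x), Pos None] @ u'"] exI[of _ z']) simp
  next
    case (eNeg x)
    then have ne: "somes z \<noteq> []" "last (somes z) = x" and pv: "pc_act v (butlast (somes z)) = Some s'"
      using run_cons.prems by (auto split: if_splits)
    obtain z0 k where z: "z = z0 @ [Some x] @ replicate k None" "somes z0 = butlast (somes z)"
      using somes_decomp[OF ne] by blast
    have "pc_act v (somes (z0 @ [None])) = Some s'" using pv z(2) by simp
    then obtain u' z' where r1: "run (sharp_edges Q E) (p1, True) u' w (q, True)" and
      pu: "pc_act u' (z0 @ [None]) = Some z'" and sz: "somes z' = s'"
      using run_cons.IH by blast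
    have ed: "((p, False), [Neg (Some x), Pos None], a1, (p1, True)) \<in> sharp_edges Q E"
      using run_cons.hyps(1) eNeg unfolding sharp_edges_def by blast
    have e4: "((p, True), [], [], (p, False)) \<in> sharp_edges Q E"
      using pQ unfolding sharp_edges_def by blast
    have r2: "run (sharp_edges Q E) (p, False) ([Neg (Some x), Pos None] @ u') (a1 @ w) (q, True)"
      by (rule run.run_cons[OF ed r1])
    have r3: "run (sharp_edges Q E) (p, False) (replicate k (Neg None) @ ([Neg (Some x), Pos None] @ u')) ([] @ (a1 @ w)) (q, True)"
      by (rule run_append[OF run_loops[OF pQ] r2])
    have r4: "run (sharp_edges Q E) (p, True) ([] @ (replicate k (Neg None) @ ([Neg (Some x), Pos None] @ u'))) ([] @ ([] @ (a1 @ w))) (q, True)"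
      by (rule run.run_cons[OF e4 r3])
    have "pc_act (replicate k (Neg None) @ ([Neg (Some x), Pos None] @ u')) z = Some z'"
      using pc_pops[of k "z0 @ [Some x]"] pu z by (simp add: pc_act_append)
    then show ?thesis using r4 sz by (intro exI[of _ "replicate k (Neg None) @ ([Neg (Some x), Pos None] @ u')"] exI[of _ z']) simp
  qed
qed



theorem theorem4p3:
  fixes Q :: "'q set" and E :: "('q \<times> 'x::finite gen list \<times> 's::finite list \<times> 'q) set"
    and q0 :: 'q and F :: "'q set" and L :: "'s list set"
  assumes "finite Q" and "finite E"
    and "q0 \<in> Q" and "F \<subseteq> Q"
    and "\<forall>(p, u, a, q) \<in> E. p \<in> Q \<and> q \<in> Q \<and> length u \<le> 1 \<and> length a \<le> 1"
    and "L = {w. accepts pc_one E q0 F w}"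
  shows "{w. accepts fg_one (sharp_edges Q E) (sharp_init q0) (sharp_finals F) w} = L
       \<and> {w. accepts pc_one (sharp_edges Q E) (sharp_init q0) (sharp_finals F) w} = L"
proof -
  let ?E = "sharp_edges Q E"
  have A: "accepts pc_one E q0 F w" if acc: "accepts fg_one ?E (sharp_init q0) (sharp_finals F) w" for w
  proof -
    obtain u' P where P: "P \<in> sharp_finals F" "run ?E (q0, True) u' w P" "fg_one u'"
      using acc unfolding accepts_def sharp_init_def by blast
    obtain q where q: "P = (q, False)" "q \<in> F" using P(1) unfolding sharp_finals_def by blast
    have "red (map Pos []) u' = []" using fg_one_red[OF P(3)] by simp
    from good_run[OF P(2) _ this] obtain u where "run E q0 u w q" "pc_act u (somes []) = Some []"
      using q by auto
    then show ?thesis unfolding accepts_def pc_one_iff using q by auto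
  qed
  have B: "accepts fg_one ?E (sharp_init q0) (sharp_finals F) w" if "accepts pc_one ?E (sharp_init q0) (sharp_finals F) w" for w
    using that pc_one_fg_one unfolding accepts_def by blast
  have C: "accepts pc_one ?E (sharp_init q0) (sharp_finals F) w" if acc: "accepts pc_one E q0 F w" for w
  proof -
    obtain u q where uq: "q \<in> F" "run E q0 u w q" "pc_one u"
      using acc unfolding accepts_def by blast
    have qQ: "q \<in> Q" using uq(1) assms(4) by blast
    have "pc_act u (somes []) = Some []" using uq(3) unfolding pc_one_iff by simp
    from sim_run[OF assms(5) uq(2) this] obtain u' z' where
      r: "run ?E (q0, True) u' w (q, True)" and pz: "pc_act u' [] = Some z'" and sz: "somes z' = []"
      by blast
    define k where "k = length z'"
    have z': "z' = [] @ replicate k None" using somes_Nil_rep[OF sz] k_def by simp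
    have e4: "((q, True), [], [], (q, False)) \<in> ?E"
      using qQ unfolding sharp_edges_def by blast
    have r2: "run ?E (q, True) ([] @ replicate k (Neg None)) ([] @ []) (q, False)"
      by (rule run.run_cons[OF e4 run_loops[OF qQ]])
    have r3: "run ?E (q0, True) (u' @ ([] @ replicate k (Neg None))) (w @ ([] @ [])) (q, False)"
      by (rule run_append[OF r r2])
    have "pc_act (u' @ ([] @ replicate k (Neg None))) [] = Some []"
      using pz z' pc_pops[of k "[]"] by (simp add: pc_act_append)
    then have pco: "pc_one (u' @ ([] @ replicate k (Neg None)))" unfolding pc_one_iff .
    have r3': "run ?E (q0, True) (u' @ ([] @ replicate k (Neg None))) w (q, False)"
      using r3 by simp
    have fin: "(q, False) \<in> sharp_finals F" using uq(1) unfolding sharp_finals_def by blast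
    show ?thesis unfolding accepts_def sharp_init_def
      by (rule exI[of _ "u' @ ([] @ replicate k (Neg None))"], rule exI[of _ "(q, False)"])
         (intro conjI fin r3' pco)
  qed
  show ?thesis using A B C assms(6) by blast
qed

end
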